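(* Consider the family of discrete-time load balancing systems described in the context, operated under a given Markovian load balancing policy, and assume $(\sigma_\Sigma^{(\epsilon)})^2 \to \sigma_\Sigma^2$ as $\epsilon\downarrow 0$. Suppose the policy is throughput optimal and that there exists $\alpha\in(0,1]$ such that the state space collapses to the cone $\mathcal{K}_\alpha$, i.e., there exist $\epsilon_0>0$ and constants $M_r$ ($r=1,2,\dots$) independent of $\epsilon$ such that $\mathbb{E}\big[\|\overline{\mathbf{Q}}^{(\epsilon)}_\perp\|^r\big]\le M_r$ for all $\epsilon\in(0,\epsilon_0)$ and all $r=1,2,\dots$. Then the policy is heavy-traffic delay optimal in steady state, i.e. $$\limsup_{\epsilon\downarrow 0}\ \epsilon\,\mathbb{E}\Big[\sum_{n=1}^N \overline{Q}_n^{(\epsilon)}\Big]\le \frac{\zeta}{2},\qquad \zeta=\sigma_\Sigma^2+\nu_\Sigma^2 .$$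
   Context: Model: a discrete-time system with one dispatcher and $N$ servers; server $n$ has an infinite-buffer FIFO queue of length $Q_n(t)$ at the beginning of slot $t$. The number of exogenous arrivals $A_\Sigma(t)$ at the beginning of slot $t$ is integer valued, i.i.d. over $t$, with mean $\lambda_\Sigma$, variance $\sigma_\Sigma^2$, $\mathbb{P}(A_\Sigma(t)=0)>0$ and $A_\Sigma(t)\le A_{\max}<\infty$. The service $S_n(t)$ offered by server $n$ in slot $t$ is integer valued, i.i.d. over $t$, independent across servers and of the arrivals, with $S_n(t)\le S_{\max}<\infty$, mean $\mu_n>0$ and variance $\nu_n^2$; $\mu_\Sigma=\sum_n\mu_n$, $\nu_\Sigma^2=\sum_n\nu_n^2$. In each slot the dispatcher sends the new arrivals to one queue according to a (possibly randomized) rule depending only on $\mathbf{Q}(t)$ (Markovian policy); $A_n(t)$ is the number routed to queue $n$. Dynamics: $Q_n(t+1)=Q_n(t)+A_n(t)-S_n(t)+U_n(t)$ with unused service $U_n(t)=\max\{S_n(t)-Q_n(t)-A_n(t),0\}$. Thus $\{\mathbf{Q}(t)\}$ is a Markov chain. One considers a family of such systems indexed by $\epsilon>0$, with the same service processes and arrival processes $A_\Sigma^{(\epsilon)}(t)$ of mean $\lambda_\Sigma^{(\epsilon)}=\mu_\Sigma-\epsilon$ and variance $(\sigma_\Sigma^{(\epsilon)})^2$. When the chain is positive recurrent, $\overline{\mathbf{Q}}^{(\epsilon)}$ denotes a random vector distributed according to its stationary distribution. A policy is throughput optimal if for every $\epsilon>0$ the chain is positive recurrent and all moments of $\|\overline{\mathbf{Q}}^{(\epsilon)}\|$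 are finite. Cone: for $\alpha\in[0,1]$, $\mathbf{b}^{(n)}\in\mathbb{R}^N$ has $n$-th component $1$ and all other components $\alpha$; $\mathcal{K}_\alpha=\{\sum_n w_n\mathbf{b}^{(n)}: w_n\ge 0\}$, and its polar cone is $\mathcal{K}_\alpha^\circ=\{\mathbf{x}:\langle \mathbf{x},\mathbf{y}\rangle\le 0\ \forall \mathbf{y}\in\mathcal{K}_\alpha\}$. Every $\mathbf{x}$ decomposes uniquely as $\mathbf{x}=\mathbf{x}_\parallel+\mathbf{x}_\perp$ with $\mathbf{x}_\parallel$ the Euclidean projection onto $\mathcal{K}_\alpha$ and $\mathbf{x}_\perp$ the projection onto $\mathcal{K}_\alpha^\circ$. $\|\cdot\|$ is the Euclidean norm. *)

theory Defs
  imports "HOL-Analysis.Analysis" "HOL-Probability.Probability"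
begin

text \<open>Q_n(t+1) = max(Q_n + A_n - S_n, 0), i.e. truncated
  nat subtraction, which equals Q_n + A_n - S_n + U_n.\<close>
definition lb_step :: "nat pmf \<Rightarrow> ('n::finite \<Rightarrow> nat pmf) \<Rightarrow> (('n \<Rightarrow> nat) \<Rightarrow> 'n pmf)
    \<Rightarrow> ('n \<Rightarrow> nat) \<Rightarrow> ('n \<Rightarrow> nat) pmf" where
  "lb_step A S P q =
     do { a \<leftarrow> A; i \<leftarrow> P q; s \<leftarrow> Pi_pmf UNIV 0 S;
          return_pmf (\<lambda>n. (q n + (if n = i then a else 0)) - s n) }"

definition stationary :: "(('n::finite \<Rightarrow> nat) \<Rightarrow> ('n \<Rightarrow> nat) pmf) \<Rightarrow> ('n \<Rightarrow> nat) pmf \<Rightarrow> bool" where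
  "stationary K \<pi> \<longleftrightarrow> bind_pmf \<pi> K = \<pi>"

definition qvec :: "('n::finite \<Rightarrow> nat) \<Rightarrow> real ^ 'n" where
  "qvec q = (\<chi> n. real (q n))"

definition cone_gen :: "real \<Rightarrow> 'n::finite \<Rightarrow> real ^ 'n" where
  "cone_gen \<alpha> n = (\<chi> m. if m = n then 1 else \<alpha>)"

definition cone_K :: "real \<Rightarrow> (real ^ 'n::finite) set" where
  "cone_K \<alpha> = {x. \<exists>w. (\<forall>n. w n \<ge> 0) \<and> x = (\<Sum>n\<in>UNIV. w n *\<^sub>R cone_gen \<alpha> n)}"

definition polar_cone :: "(real ^ 'n::finite) set \<Rightarrow> (real ^ 'n) set" where
  "polar_cone K = {x. \<forall>y\<in>K. inner x y \<le> 0}"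

definition perp_comp :: "real \<Rightarrow> real ^ 'n::finite \<Rightarrow> real ^ 'n" where
  "perp_comp \<alpha> x = closest_point (polar_cone (cone_K \<alpha>)) x"

end

theory Submission
  imports Defs
begin


lemma exp_bind_nonneg:
  fixes f :: "'b \<Rightarrow> real"
  assumes fin: "\<And>x. x \<in> set_pmf M \<Longrightarrow> finite (set_pmf (N x))"
    and nn: "\<And>y. 0 \<le> f y"
    and int: "integrable (measure_pmf (bind_pmf M N)) f"
  shows "integrable M (\<lambda>x. measure_pmf.expectation (N x) f) \<and>
         measure_pmf.expectation (bind_pmf M N) f = measure_pmf.expectation M (\<lambda>x. measure_pmf.expectation (N x) f)"
proof -
  define g where "g = (\<lambda>x. measure_pmf.expectation (N x) f)"
  have g_nn: "\<And>x. 0 \<le> g x" unfolding g_def by (simp add: nn integral_nonneg_AE)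
  have "ennreal (measure_pmf.expectation (bind_pmf M N) f) = (\<integral>\<^sup>+y. ennreal (f y) \<partial>bind_pmf M N)"
    by (rule nn_integral_eq_integral[symmetric]) (use int nn in auto)
  also have "\<dots> = (\<integral>\<^sup>+x. \<integral>\<^sup>+y. ennreal (f y) \<partial>N x \<partial>M)" by simp
  also have "\<dots> = (\<integral>\<^sup>+x. ennreal (g x) \<partial>M)"
    unfolding g_def
    by (intro nn_integral_cong_AE AE_pmfI nn_integral_eq_integral integrable_measure_pmf_finite fin)
       (auto simp: nn)
  finally have eq: "(\<integral>\<^sup>+x. ennreal (g x) \<partial>M) = ennreal (measure_pmf.expectation (bind_pmf M N) f)" ..
  have ig: "integrable M g" by (rule integrableI_nn_integral_finite[OF _ _ eq]) (auto simp: g_nn)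
  then have "(\<integral>\<^sup>+x. ennreal (g x) \<partial>M) = ennreal (measure_pmf.expectation M g)"
    by (intro nn_integral_eq_integral) (auto simp: g_nn)
  with eq have "ennreal (measure_pmf.expectation (bind_pmf M N) f) = ennreal (measure_pmf.expectation M g)" by simp
  then have "measure_pmf.expectation (bind_pmf M N) f = measure_pmf.expectation M g"
    by (subst (asm) ennreal_inj) (auto simp: g_nn nn integral_nonneg_AE)
  with ig show ?thesis unfolding g_def by simp
qed

lemma exp_bind_fin:
  fixes f :: "'b \<Rightarrow> real"
  assumes finM: "finite (set_pmf M)" and fin: "\<And>x. x \<in> set_pmf M \<Longrightarrow> finite (set_pmf (N x))"
  shows "measure_pmf.expectation (bind_pmf M N) f = measure_pmf.expectation M (\<lambda>x. measure_pmf.expectation (N x) f)"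
proof -
  have finB: "finite (set_pmf (bind_pmf M N))" using finM fin by (simp add: set_bind_pmf)
  define fp where "fp = (\<lambda>y. max (f y) 0)"
  define fm where "fm = (\<lambda>y. max (- f y) 0)"
  have ff: "f = (\<lambda>y. fp y - fm y)" unfolding fp_def fm_def by (auto simp: max_def)
  have p: "measure_pmf.expectation (bind_pmf M N) fp = measure_pmf.expectation M (\<lambda>x. measure_pmf.expectation (N x) fp)"
    using exp_bind_nonneg[of M N fp, OF fin] integrable_measure_pmf_finite[OF finB] by (auto simp: fp_def)
  have m: "measure_pmf.expectation (bind_pmf M N) fm = measure_pmf.expectation M (\<lambda>x. measure_pmf.expectation (N x) fm)"
    using exp_bind_nonneg[of M N fm, OF fin] integrable_measure_pmf_finite[OF finB] by (auto simp: fm_def)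
  have "measure_pmf.expectation (bind_pmf M N) f = measure_pmf.expectation (bind_pmf M N) fp - measure_pmf.expectation (bind_pmf M N) fm"
    by (subst ff, rule Bochner_Integration.integral_diff) (auto intro: integrable_measure_pmf_finite[OF finB])
  also have "\<dots> = measure_pmf.expectation M (\<lambda>x. measure_pmf.expectation (N x) fp - measure_pmf.expectation (N x) fm)"
    by (simp add: p m Bochner_Integration.integral_diff integrable_measure_pmf_finite[OF finM])
  also have "\<dots> = measure_pmf.expectation M (\<lambda>x. measure_pmf.expectation (N x) f)"
  proof (rule Bochner_Integration.integral_cong_AE)
    show "AE x in measure_pmf M. measure_pmf.expectation (N x) fp - measure_pmf.expectation (N x) fm =
          measure_pmf.expectation (N x) f"
    proof (rule AE_pmfI)
      fix x assume x: "x \<in> set_pmf M"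
      show "measure_pmf.expectation (N x) fp - measure_pmf.expectation (N x) fm = measure_pmf.expectation (N x) f"
      proof -
        have "measure_pmf.expectation (N x) f = measure_pmf.expectation (N x) (\<lambda>y. fp y - fm y)"
          by (rule arg_cong[where f="measure_pmf.expectation (N x)"]) (rule ff)
        also have "\<dots> = measure_pmf.expectation (N x) fp - measure_pmf.expectation (N x) fm"
          by (rule Bochner_Integration.integral_diff) (auto intro: integrable_measure_pmf_finite fin x)
        finally show ?thesis by simp
      qed
    qed
  qed simp_all
  finally show ?thesis .
qed

lemma exp_pair_prod:
  fixes f :: "'a \<Rightarrow> real" and g :: "'b \<Rightarrow> real"
  assumes "finite (set_pmf A)" "finite (set_pmf B)"
  shows "measure_pmf.expectation (pair_pmf A B) (\<lambda>x. f (fst x) * g (snd x)) =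
         measure_pmf.expectation A f * measure_pmf.expectation B g"
proof -
  have "measure_pmf.expectation (pair_pmf A B) (\<lambda>x. f (fst x) * g (snd x)) =
        measure_pmf.expectation A (\<lambda>a. measure_pmf.expectation (bind_pmf B (\<lambda>b. return_pmf (a, b))) (\<lambda>x. f (fst x) * g (snd x)))"
    unfolding pair_pmf_def using assms by (intro exp_bind_fin) (auto simp: set_bind_pmf)
  also have "\<dots> = measure_pmf.expectation A (\<lambda>a. f a * measure_pmf.expectation B g)"
    by (simp add: exp_bind_fin assms)
  also have "\<dots> = measure_pmf.expectation A f * measure_pmf.expectation B g" by simp
  finally show ?thesis .
qed



lemma polar_closed: "closed (polar_cone K)"
proof -
  have "polar_cone K = (\<Inter>y\<in>K. {x. inner y x \<le> 0})" by (auto simp: polar_cone_def inner_commute)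
  then show ?thesis by (simp add: closed_INT closed_halfspace_le)
qed

lemma polar_convex: "convex (polar_cone K)"
  unfolding polar_cone_def convex_def
proof (safe)
  fix x y and u v :: real and z
  assume x: "\<forall>z\<in>K. inner x z \<le> 0" and y: "\<forall>z\<in>K. inner y z \<le> 0" and u: "0 \<le> u" and v: "0 \<le> v"
    and z: "z \<in> K"
  have "u * inner x z \<le> 0" using x z u by (simp add: mult_nonneg_nonpos)
  moreover have "v * inner y z \<le> 0" using y z v by (simp add: mult_nonneg_nonpos)
  ultimately show "inner (u *\<^sub>R x + v *\<^sub>R y) z \<le> 0" by (simp add: inner_add_left)
qed

lemma polar_zero: "0 \<in> polar_cone K"
  unfolding polar_cone_def by simp

lemma polar_scale: "x \<in> polar_cone K \<Longrightarrow> 0 \<le> c \<Longrightarrow> c *\<^sub>R x \<in> polar_cone K"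
  unfolding polar_cone_def by (auto simp: mult_nonneg_nonpos)

lemma perp_in: "perp_comp \<alpha> x \<in> polar_cone (cone_K \<alpha>)"
  unfolding perp_comp_def using polar_closed polar_zero
  by (intro closest_point_in_set) auto

lemma perp_norm: "norm (perp_comp \<alpha> x) \<le> 2 * norm x"
proof -
  have "dist x (perp_comp \<alpha> x) \<le> dist x 0"
    unfolding perp_comp_def by (rule closest_point_le[OF polar_closed polar_zero])
  then have "norm (x - perp_comp \<alpha> x) \<le> norm x" by (simp add: dist_norm)
  moreover have "norm (perp_comp \<alpha> x) \<le> norm x + norm (x - perp_comp \<alpha> x)"
    by (metis add_diff_cancel_left' diff_add_cancel norm_triangle_ineq4 add.commute norm_minus_commute norm_triangle_sub)
  ultimately show ?thesis by simp
qed

lemma cone_comp: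
  assumes "v \<in> cone_K \<alpha>" "0 < \<alpha>" "\<alpha> \<le> 1"
  shows "\<alpha> * v $ k \<le> v $ n"
proof -
  obtain w where w: "\<forall>m. w m \<ge> 0" "v = (\<Sum>m\<in>UNIV. w m *\<^sub>R cone_gen \<alpha> m)"
    using assms(1) unfolding cone_K_def by auto
  have vk: "\<And>k. v $ k = (\<Sum>m\<in>UNIV. w m * (if k = m then 1 else \<alpha>))"
    using w(2) by (simp add: cone_gen_def sum_component)
  have "\<alpha> * v $ k = (\<Sum>m\<in>UNIV. w m * (\<alpha> * (if k = m then 1 else \<alpha>)))"
    by (simp add: vk sum_distrib_left algebra_simps)
  also have "\<dots> \<le> (\<Sum>m\<in>UNIV. w m * (if n = m then 1 else \<alpha>))"
  proof (rule sum_mono)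
    fix m
    have "\<alpha> * (if k = m then 1 else \<alpha>) \<le> (if n = m then 1 else \<alpha>)"
      using assms(2,3) by (auto simp: mult_le_one mult_left_le)
    then show "w m * (\<alpha> * (if k = m then 1 else \<alpha>)) \<le> w m * (if n = m then 1 else \<alpha>)"
      using w(1) by (intro mult_left_mono) auto
  qed
  also have "\<dots> = v $ n" by (simp add: vk)
  finally show ?thesis .
qed

lemma perp_bound:
  fixes y :: "'n::finite \<Rightarrow> nat"
  assumes a: "0 < \<alpha>" "\<alpha> \<le> 1" and yn: "y n = 0"
  shows "real (\<Sum>m\<in>UNIV. y m) \<le> real CARD('n) * (1 + 1/\<alpha>) * norm (perp_comp \<alpha> (qvec y))"
proof -
  define x where "x = qvec y"
  define p where "p = perp_comp \<alpha> x"
  define Pc where "Pc = polar_cone (cone_K \<alpha> :: (real^'n) set)"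
  have pP: "p \<in> Pc" unfolding p_def Pc_def by (rule perp_in)
  have dot: "\<And>z. z \<in> Pc \<Longrightarrow> inner (x - p) (z - p) \<le> 0"
    unfolding p_def perp_comp_def Pc_def by (rule closest_point_dot[OF polar_convex polar_closed])
  have xk: "x $ k \<le> (1 + 1/\<alpha>) * norm p" for k
  proof -
    define z :: "real^'n" where "z = axis k 1 - (1/\<alpha>) *\<^sub>R axis n 1"
    have iz: "inner u z = u $ k - u $ n / \<alpha>" for u :: "real^'n"
      by (simp add: z_def inner_diff_right inner_axis)
    have zP: "z \<in> Pc"
      unfolding Pc_def polar_cone_def
    proof safe
      fix v :: "real^'n" assume v: "v \<in> cone_K \<alpha>"
      have "\<alpha> * v $ k \<le> v $ n" by (rule cone_comp[OF v a])
      then have "v $ k \<le> v $ n / \<alpha>" using a by (simp add: field_simps)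
      then show "inner z v \<le> 0" by (simp add: inner_commute[of z] iz)
    qed
    have p2: "2 *\<^sub>R p \<in> Pc" unfolding Pc_def by (rule polar_scale) (use pP Pc_def in auto)
    have "inner (x - p) (2 *\<^sub>R p - p) \<le> 0" by (rule dot[OF p2])
    moreover have "inner (x - p) (z - p) \<le> 0" by (rule dot[OF zP])
    ultimately have "inner (x - p) z \<le> 0"
      by (simp add: inner_diff_right algebra_simps)
    then have "x $ k - p $ k - (x $ n - p $ n) / \<alpha> \<le> 0" by (simp add: iz)
    moreover have "x $ n = 0" by (simp add: x_def qvec_def yn)
    ultimately have "x $ k \<le> p $ k - p $ n / \<alpha>" by (simp add: field_simps)
    also have "\<dots> \<le> norm p + norm p / \<alpha>"
    proof -
      have "p $ k \<le> norm p" using component_le_norm_cart[of p k] by simp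
      moreover have "- p $ n / \<alpha> \<le> norm p / \<alpha>"
        using component_le_norm_cart[of p n] a by (intro divide_right_mono) auto
      ultimately show ?thesis by simp
    qed
    finally show ?thesis by (simp add: algebra_simps)
  qed
  have "real (\<Sum>m\<in>UNIV. y m) = (\<Sum>m\<in>UNIV. x $ m)" by (simp add: x_def qvec_def)
  also have "\<dots> \<le> (\<Sum>m\<in>(UNIV::'n set). (1 + 1/\<alpha>) * norm p)" by (rule sum_mono) (rule xk)
  also have "\<dots> = real CARD('n) * (1 + 1/\<alpha>) * norm p" by simp
  finally show ?thesis by (simp add: p_def x_def)
qed



lemma lb_step_map:
  "lb_step A S P q = map_pmf (\<lambda>(a, i, s). \<lambda>n. (q n + (if n = i then a else 0)) - s n)
      (pair_pmf A (pair_pmf (P q) (Pi_pmf UNIV 0 S)))"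
  by (simp add: lb_step_def pair_pmf_def map_pmf_def bind_assoc_pmf bind_return_pmf)

lemma Pi_fin:
  fixes S :: "'n::finite \<Rightarrow> nat pmf"
  assumes "\<And>n. finite (set_pmf (S n))"
  shows "finite (set_pmf (Pi_pmf UNIV 0 S))"
  using assms by (auto simp: set_Pi_pmf intro!: finite_PiE_dflt)

lemma Pi_comp:
  fixes S :: "'n::finite \<Rightarrow> nat pmf" and f :: "nat \<Rightarrow> real"
  shows "measure_pmf.expectation (Pi_pmf UNIV 0 S) (\<lambda>s. f (s m)) = measure_pmf.expectation (S m) f"
proof -
  have "measure_pmf.expectation (Pi_pmf UNIV 0 S) (\<lambda>s. f (s m)) =
        measure_pmf.expectation (map_pmf (\<lambda>s. s m) (Pi_pmf UNIV 0 S)) f" by simp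
  also have "map_pmf (\<lambda>s. s m) (Pi_pmf UNIV 0 S) = S m" by (simp add: Pi_pmf_component)
  finally show ?thesis .
qed

lemma Pi_cross:
  fixes S :: "'n::finite \<Rightarrow> nat pmf"
  assumes fin: "\<And>n. finite (set_pmf (S n))" and mn: "m \<noteq> n"
  shows "measure_pmf.expectation (Pi_pmf UNIV 0 S) (\<lambda>s. real (s m) * real (s n)) =
         measure_pmf.expectation (S m) real * measure_pmf.expectation (S n) real"
proof -
  define f where "f = (\<lambda>x (v::nat). if x \<in> {m, n} then real v else 1)"
  have pr: "(\<Prod>x\<in>UNIV. f x (g x)) = (\<Prod>x\<in>{m,n}. real (g x))" for g :: "'n \<Rightarrow> nat"
    unfolding f_def by (subst prod.inter_restrict[symmetric]) auto
  have "measure_pmf.expectation (Pi_pmf UNIV 0 S) (\<lambda>s. real (s m) * real (s n)) =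
        measure_pmf.expectation (Pi_pmf UNIV 0 S) (\<lambda>s. \<Prod>x\<in>UNIV. f x (s x))"
    using mn by (simp add: pr)
  also have "\<dots> = (\<Prod>x\<in>UNIV. measure_pmf.expectation (S x) (f x))"
    by (rule expectation_prod_Pi_pmf) (auto simp: f_def intro: integrable_measure_pmf_finite fin)
  also have "\<dots> = (\<Prod>x\<in>UNIV. if x \<in> {m,n} then measure_pmf.expectation (S x) real else 1)"
    by (rule prod.cong) (auto simp: f_def)
  also have "\<dots> = (\<Prod>x\<in>{m,n}. measure_pmf.expectation (S x) real)"
    by (subst prod.inter_restrict[symmetric]) auto
  also have "\<dots> = measure_pmf.expectation (S m) real * measure_pmf.expectation (S n) real"
    using mn by simp
  finally show ?thesis .
qed

lemma Pi_sum_sq: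
  fixes S :: "'n::finite \<Rightarrow> nat pmf"
  assumes fin: "\<And>n. finite (set_pmf (S n))"
  shows "measure_pmf.expectation (Pi_pmf UNIV 0 S) (\<lambda>s. (\<Sum>m\<in>UNIV. real (s m))^2) =
         (\<Sum>m\<in>UNIV. measure_pmf.expectation (S m) real)^2 + (\<Sum>m\<in>UNIV. measure_pmf.variance (S m) real)"
proof -
  define mu where "mu = (\<lambda>m. measure_pmf.expectation (S m) real)"
  define v where "v = (\<lambda>m. measure_pmf.variance (S m) real)"
  have finP: "finite (set_pmf (Pi_pmf UNIV 0 S))" by (rule Pi_fin[OF fin])
  have pair: "measure_pmf.expectation (Pi_pmf UNIV 0 S) (\<lambda>s. real (s m) * real (s n)) =
        mu m * mu n + (if m = n then v m else 0)" for m n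
  proof (cases "m = n")
    case True
    have "measure_pmf.expectation (Pi_pmf UNIV 0 S) (\<lambda>s. real (s m) * real (s n)) =
          measure_pmf.expectation (S m) (\<lambda>x. (real x)^2)"
      using True Pi_comp[where f="\<lambda>x. (real x)^2" and S=S and m=m] by (simp add: power2_eq_square)
    also have "\<dots> = v m + (mu m)^2"
      unfolding v_def mu_def
      by (subst measure_pmf.variance_eq) (auto intro: integrable_measure_pmf_finite fin)
    finally show ?thesis using True by (simp add: power2_eq_square)
  next
    case False
    then show ?thesis using Pi_cross[OF fin False] by (simp add: mu_def)
  qed
  have "measure_pmf.expectation (Pi_pmf UNIV 0 S) (\<lambda>s. (\<Sum>m\<in>UNIV. real (s m))^2) =
        measure_pmf.expectation (Pi_pmf UNIV 0 S) (\<lambda>s. \<Sum>m\<in>UNIV. \<Sum>n\<in>UNIV. real (s m) * real (s n))"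
    by (simp add: power2_eq_square sum_product)
  also have "\<dots> = (\<Sum>m\<in>UNIV. \<Sum>n\<in>UNIV. measure_pmf.expectation (Pi_pmf UNIV 0 S) (\<lambda>s. real (s m) * real (s n)))"
    by (simp add: Bochner_Integration.integral_sum integrable_measure_pmf_finite[OF finP])
  also have "\<dots> = (\<Sum>m\<in>UNIV. \<Sum>n\<in>UNIV. mu m * mu n + (if m = n then v m else 0))"
    by (simp add: pair)
  also have "\<dots> = (\<Sum>m\<in>UNIV. mu m)^2 + (\<Sum>m\<in>UNIV. v m)"
    by (simp add: sum.distrib power2_eq_square sum_product)
  finally show ?thesis by (simp add: mu_def v_def)
qed

lemma Pi_sum:
  fixes S :: "'n::finite \<Rightarrow> nat pmf"
  assumes fin: "\<And>n. finite (set_pmf (S n))"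
  shows "measure_pmf.expectation (Pi_pmf UNIV 0 S) (\<lambda>s. (\<Sum>m\<in>UNIV. real (s m))) =
         (\<Sum>m\<in>UNIV. measure_pmf.expectation (S m) real)"
  using Pi_comp[where f=real and S=S]
  by (simp add: Bochner_Integration.integral_sum integrable_measure_pmf_finite[OF Pi_fin[OF fin]])



lemma amgm: "0 < (d::real) \<Longrightarrow> 2 * t * u \<le> d * t^2 + u^2 / d"
proof -
  assume d: "0 < d"
  have "0 \<le> (d * t - u)^2 / d" using d by simp
  also have "(d * t - u)^2 / d = d * t^2 + u^2 / d - 2 * t * u"
    using d by (simp add: power2_eq_square field_simps)
  finally show ?thesis by simp
qed

lemma pointwise:
  fixes q :: "'n::finite \<Rightarrow> nat" and s :: "'n \<Rightarrow> nat" and a :: nat and i :: 'n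
  assumes al: "0 < \<alpha>" "\<alpha> \<le> 1" and dl: "0 < \<delta>" and sb: "\<And>n. s n \<le> Smax"
  defines "y \<equiv> \<lambda>n. (q n + (if n = i then a else 0)) - s n"
  defines "X \<equiv> real (\<Sum>n\<in>UNIV. q n)"
  defines "Y \<equiv> real (\<Sum>n\<in>UNIV. y n)"
  defines "D \<equiv> real a - (\<Sum>n\<in>UNIV. real (s n))"
  defines "C \<equiv> real CARD('n) * (1 + 1/\<alpha>)"
  shows "Y^2 \<le> X^2 + 2*X*D + D^2 + C*\<delta>*(norm (perp_comp \<alpha> (qvec y)))^2
               + (C * real CARD('n) * real Smax / \<delta>) * (Y - X - D)"
proof -
  define u where "u = (\<lambda>n. real (y n) - real (q n) - real (if n = i then a else 0) + real (s n))"
  have u0: "0 \<le> u n" for n unfolding u_def y_def by auto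
  have u1: "u n \<le> real Smax" for n using sb[of n] unfolding u_def y_def by auto
  have u2: "u n > 0 \<Longrightarrow> y n = 0" for n unfolding u_def y_def by auto
  define U where "U = Y - X - D"
  have asum: "real a = (\<Sum>n\<in>UNIV. real (if n = i then a else 0))"
    by (simp add: if_distrib cong: if_cong)
  have UU: "U = (\<Sum>n\<in>UNIV. u n)"
    unfolding U_def u_def Y_def X_def D_def
    by (subst asum) (simp add: sum_subtractf sum.distrib)
  have U0: "0 \<le> U" unfolding UU by (rule sum_nonneg) (use u0 in auto)
  have U1: "U \<le> real CARD('n) * real Smax"
  proof -
    have "U \<le> (\<Sum>n\<in>(UNIV::'n set). real Smax)" unfolding UU by (rule sum_mono) (rule u1)
    then show ?thesis by simp
  qed
  define p where "p = norm (perp_comp \<alpha> (qvec y))"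
  have C0: "0 \<le> C" unfolding C_def using al by simp
  have YU: "Y * U \<le> C * p * U"
  proof (cases "U = 0")
    case True then show ?thesis by simp
  next
    case False
    then have "U > 0" using U0 by simp
    then obtain n where "u n > 0"
      unfolding UU by (metis not_less sum_nonpos)
    then have "y n = 0" by (rule u2)
    then have "Y \<le> C * p" unfolding Y_def C_def p_def by (rule perp_bound[OF al])
    then show ?thesis using U0 by (rule mult_right_mono)
  qed
  have am: "2 * p * U \<le> \<delta> * p^2 + U^2 / \<delta>" by (rule amgm[OF dl])
  have YY: "Y = X + D + U" unfolding U_def by simp
  have "Y^2 = (X + D)^2 + 2 * (Y * U) - U^2" unfolding YY by (simp add: power2_eq_square algebra_simps)
  also have "\<dots> \<le> (X + D)^2 + C * (2 * p * U) - U^2" using YU by simp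
  also have "\<dots> \<le> (X + D)^2 + C * (\<delta> * p^2 + U^2 / \<delta>)"
    using mult_left_mono[OF am C0] by (simp add: zero_le_power2 [of U] add_increasing2 diff_le_eq)
  also have "U^2 \<le> real CARD('n) * real Smax * U"
    unfolding power2_eq_square using mult_right_mono[OF U1 U0] by simp
  then have "C * (\<delta> * p^2 + U^2 / \<delta>) \<le> C * (\<delta> * p^2 + real CARD('n) * real Smax * U / \<delta>)"
    using C0 dl by (intro mult_left_mono add_left_mono divide_right_mono) auto
  finally show ?thesis unfolding U_def p_def
    by (simp add: power2_eq_square algebra_simps)
qed



lemma kernel_ineq:
  fixes A :: "nat pmf" and S :: "'n::finite \<Rightarrow> nat pmf" and P :: "('n \<Rightarrow> nat) \<Rightarrow> 'n pmf"
    and q :: "'n \<Rightarrow> nat" and \<alpha> \<delta> :: real and Smax :: nat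
  defines "lam \<equiv> measure_pmf.expectation A real"
  defines "vA \<equiv> measure_pmf.variance A real"
  defines "mS \<equiv> (\<Sum>n\<in>UNIV. measure_pmf.expectation (S n) real)"
  defines "nu2 \<equiv> (\<Sum>n\<in>UNIV. measure_pmf.variance (S n) real)"
  defines "X \<equiv> real (\<Sum>n\<in>UNIV. q n)"
  defines "C \<equiv> real CARD('n) * (1 + 1/\<alpha>)"
  defines "K \<equiv> lb_step A S P q"
  assumes al: "0 < \<alpha>" "\<alpha> \<le> 1" and dl: "0 < \<delta>"
    and finA: "finite (set_pmf A)"
    and sb: "\<And>n. set_pmf (S n) \<subseteq> {..Smax}"
  shows "measure_pmf.expectation K (\<lambda>y. (real (\<Sum>n\<in>UNIV. y n))^2) \<le>
           X^2 + 2*X*(lam - mS) + (vA + (lam - mS)^2 + nu2)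
           + C*\<delta>* measure_pmf.expectation K (\<lambda>y. (norm (perp_comp \<alpha> (qvec y)))^2)
           + (C * real CARD('n) * real Smax / \<delta>) *
               (measure_pmf.expectation K (\<lambda>y. real (\<Sum>n\<in>UNIV. y n)) - X - (lam - mS))"
proof -
  define nx where "nx = (\<lambda>(a::nat, i::'n, s::'n\<Rightarrow>nat). \<lambda>n. (q n + (if n = i then a else 0)) - s n)"
  define Pi where "Pi = Pi_pmf UNIV 0 S"
  define J where "J = pair_pmf A (pair_pmf (P q) Pi)"
  have KJ: "K = map_pmf nx J" unfolding K_def J_def nx_def Pi_def by (rule lb_step_map)
  have finS: "finite (set_pmf (S n))" for n using sb[of n] finite_subset by blast
  have finPi: "finite (set_pmf Pi)" unfolding Pi_def by (rule Pi_fin[OF finS])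
  have finJ: "finite (set_pmf J)" unfolding J_def using finA finPi by simp
  note intJ = integrable_measure_pmf_finite[OF finJ]
  have EK: "measure_pmf.expectation K f = measure_pmf.expectation J (\<lambda>x. f (nx x))" for f :: "_ \<Rightarrow> real"
    by (simp add: KJ)
  define Dx where "Dx = (\<lambda>x::nat\<times>'n\<times>('n\<Rightarrow>nat). real (fst x) - (\<Sum>n\<in>UNIV. real (snd (snd x) n)))"
  define Yx where "Yx = (\<lambda>x. real (\<Sum>n\<in>UNIV. nx x n))"
  define Px where "Px = (\<lambda>x. norm (perp_comp \<alpha> (qvec (nx x))))"
  define c' where "c' = C * real CARD('n) * real Smax / \<delta>"
  have pw: "Yx x ^2 \<le> X^2 + 2*X*Dx x + (Dx x)^2 + C*\<delta>*(Px x)^2 + c' * (Yx x - X - Dx x)"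
    if x: "x \<in> set_pmf J" for x
  proof -
    obtain a i s where xe: "x = (a, i, s)" by (cases x) auto
    have "s \<in> set_pmf Pi" using x unfolding J_def xe by simp
    then have "s n \<in> set_pmf (S n)" for n
      unfolding Pi_def by (auto simp: set_Pi_pmf PiE_dflt_def)
    then have sbd: "s n \<le> Smax" for n using sb by blast
    show ?thesis
      using pointwise[OF al dl sbd, of q i a]
      unfolding Yx_def Dx_def Px_def c'_def C_def X_def xe nx_def by simp
  qed
  have "measure_pmf.expectation K (\<lambda>y. (real (\<Sum>n\<in>UNIV. y n))^2) = measure_pmf.expectation J (\<lambda>x. Yx x ^2)"
    by (simp add: EK Yx_def)
  also have "\<dots> \<le> measure_pmf.expectation J (\<lambda>x. X^2 + 2*X*Dx x + (Dx x)^2 + C*\<delta>*(Px x)^2 + c' * (Yx x - X - Dx x))"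
    by (rule integral_mono_AE[OF intJ intJ]) (rule AE_pmfI, rule pw)
  also have "\<dots> = X^2 + 2*X*measure_pmf.expectation J Dx + measure_pmf.expectation J (\<lambda>x. (Dx x)^2)
       + C*\<delta>*measure_pmf.expectation J (\<lambda>x. (Px x)^2) + c' * (measure_pmf.expectation J Yx - X - measure_pmf.expectation J Dx)"
    by (simp add: intJ Bochner_Integration.integral_add Bochner_Integration.integral_diff algebra_simps)
  also have "measure_pmf.expectation J Dx = lam - mS"
  proof -
    have "measure_pmf.expectation J Dx = measure_pmf.expectation J (\<lambda>x. real (fst x)) -
            measure_pmf.expectation J (\<lambda>x. (\<lambda>z. \<Sum>n\<in>UNIV. real (snd z n)) (snd x))"
      unfolding Dx_def by (simp add: intJ Bochner_Integration.integral_diff)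
    also have "\<dots> = lam - measure_pmf.expectation Pi (\<lambda>s. \<Sum>n\<in>UNIV. real (s n))"
      unfolding J_def lam_def
      by (simp only: expectation_pair_pmf_fst expectation_pair_pmf_snd[where f="\<lambda>z. \<Sum>n\<in>UNIV. real (snd z n)"]
            expectation_pair_pmf_snd[where f="\<lambda>s. \<Sum>n\<in>UNIV. real (s n)"])
    also have "measure_pmf.expectation Pi (\<lambda>s. \<Sum>n\<in>UNIV. real (s n)) = mS"
      unfolding Pi_def mS_def by (rule Pi_sum[OF finS])
    finally show ?thesis .
  qed
  also have "measure_pmf.expectation J (\<lambda>x. (Dx x)^2) = vA + (lam - mS)^2 + nu2"
  proof -
    define g where "g = (\<lambda>z::'n\<times>('n\<Rightarrow>nat). \<Sum>n\<in>UNIV. real (snd z n))"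
    have "measure_pmf.expectation J (\<lambda>x. (Dx x)^2) =
          measure_pmf.expectation J (\<lambda>x. (real (fst x))^2) - 2 * measure_pmf.expectation J (\<lambda>x. real (fst x) * g (snd x))
          + measure_pmf.expectation J (\<lambda>x. (g (snd x))^2)"
    proof -
      have "(\<lambda>x. (Dx x)^2) = (\<lambda>x. (real (fst x))^2 - 2 * (real (fst x) * g (snd x)) + (g (snd x))^2)"
        by (auto simp: Dx_def g_def power2_eq_square algebra_simps)
      then show ?thesis
        by (simp only: Bochner_Integration.integral_add Bochner_Integration.integral_diff intJ
             Bochner_Integration.integral_mult_right_zero)
    qed
    also have "measure_pmf.expectation J (\<lambda>x. (real (fst x))^2) = measure_pmf.expectation A (\<lambda>a. (real a)^2)"
      unfolding J_def by (rule expectation_pair_pmf_fst)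
    also have "\<dots> = vA + lam^2"
      unfolding vA_def lam_def
      by (subst measure_pmf.variance_eq) (auto intro: integrable_measure_pmf_finite finA)
    also have "measure_pmf.expectation J (\<lambda>x. real (fst x) * g (snd x)) =
               lam * measure_pmf.expectation (pair_pmf (P q) Pi) g"
      unfolding J_def lam_def
      by (rule exp_pair_prod) (use finA finPi in auto)
    also have "measure_pmf.expectation (pair_pmf (P q) Pi) g = mS"
    proof -
      have "measure_pmf.expectation (pair_pmf (P q) Pi) g = measure_pmf.expectation Pi (\<lambda>s. \<Sum>n\<in>UNIV. real (s n))"
        unfolding g_def by (rule expectation_pair_pmf_snd[where f="\<lambda>s. \<Sum>n\<in>UNIV. real (s n)"])
      also have "\<dots> = mS" unfolding Pi_def mS_def by (rule Pi_sum[where S=S, OF finS])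
      finally show ?thesis .
    qed
    also have "measure_pmf.expectation J (\<lambda>x. (g (snd x))^2) = measure_pmf.expectation (pair_pmf (P q) Pi) (\<lambda>z. (g z)^2)"
      unfolding J_def by (rule expectation_pair_pmf_snd)
    also have "\<dots> = measure_pmf.expectation Pi (\<lambda>s. (\<Sum>n\<in>UNIV. real (s n))^2)"
      unfolding g_def by (rule expectation_pair_pmf_snd[where f="\<lambda>s. (\<Sum>n\<in>UNIV. real (s n))^2"])
    also have "\<dots> = mS^2 + nu2"
      unfolding Pi_def mS_def nu2_def by (rule Pi_sum_sq[OF finS])
    finally show ?thesis by (simp add: power2_eq_square algebra_simps)
  qed
  also have "measure_pmf.expectation J (\<lambda>x. (Px x)^2) = measure_pmf.expectation K (\<lambda>y. (norm (perp_comp \<alpha> (qvec y)))^2)"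
    by (simp add: EK Px_def)
  also have "measure_pmf.expectation J Yx = measure_pmf.expectation K (\<lambda>y. real (\<Sum>n\<in>UNIV. y n))"
    by (simp add: EK Yx_def)
  finally show ?thesis unfolding c'_def .
qed


lemma half_le: "2 * (x::real) \<le> a + b \<Longrightarrow> x \<le> a / 2 + b / 2" by linarith

lemma stat_exp:
  fixes f :: "'b \<Rightarrow> real"
  assumes st: "bind_pmf ppi K = ppi" and fin: "\<And>q. finite (set_pmf (K q))"
    and nn: "\<And>y. 0 \<le> f y" and int: "integrable (measure_pmf ppi) f"
  shows "integrable (measure_pmf ppi) (\<lambda>q. measure_pmf.expectation (K q) f) \<and>
         measure_pmf.expectation ppi f = measure_pmf.expectation ppi (\<lambda>q. measure_pmf.expectation (K q) f)"
proof -
  have "integrable (measure_pmf (bind_pmf ppi K)) f" using int st by simp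
  from exp_bind_nonneg[of ppi K f, OF fin nn this] st show ?thesis by simp
qed

lemma lb_fin:
  fixes S :: "'n::finite \<Rightarrow> nat pmf"
  assumes finA: "finite (set_pmf A)" and sb: "\<And>n. set_pmf (S n) \<subseteq> {..Smax}"
  shows "finite (set_pmf (lb_step A S P q))"
proof -
  have finS: "finite (set_pmf (S n))" for n using sb[of n] finite_subset by blast
  have "finite (set_pmf (pair_pmf A (pair_pmf (P q) (Pi_pmf UNIV 0 S))))"
    using finA Pi_fin[where S=S, OF finS] by simp
  then show ?thesis by (simp add: lb_step_map)
qed

lemma sum_le_norm:
  fixes q :: "'n::finite \<Rightarrow> nat"
  shows "real (\<Sum>n\<in>UNIV. q n) \<le> real CARD('n) * norm (qvec q)"
proof -
  have "real (\<Sum>n\<in>UNIV. q n) = (\<Sum>n\<in>UNIV. qvec q $ n)" by (simp add: qvec_def)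
  also have "\<dots> \<le> (\<Sum>n\<in>(UNIV::'n set). norm (qvec q))"
    by (rule sum_mono) (metis abs_ge_self component_le_norm_cart order_trans)
  finally show ?thesis by simp
qed


theorem theorem1:
  fixes Arr :: "real \<Rightarrow> nat pmf"
    and S :: "'n::finite \<Rightarrow> nat pmf"
    and P :: "('n \<Rightarrow> nat) \<Rightarrow> 'n pmf"
    and Qbar :: "real \<Rightarrow> ('n \<Rightarrow> nat) pmf"
    and Amax Smax :: nat
    and sigma2 :: real
  defines "mu \<equiv> \<lambda>n. measure_pmf.expectation (S n) real"
  defines "muS \<equiv> (\<Sum>n\<in>UNIV. mu n)"
  defines "zeta \<equiv> sigma2 + (\<Sum>n\<in>UNIV. measure_pmf.variance (S n) real)"
  assumes serv_bdd: "\<And>n. set_pmf (S n) \<subseteq> {..Smax}"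
    and serv_pos: "\<And>n. mu n > 0"
    and arr_bdd: "\<And>\<epsilon>. 0 < \<epsilon> \<Longrightarrow> \<epsilon> < muS \<Longrightarrow> set_pmf (Arr \<epsilon>) \<subseteq> {..Amax}"
    and arr_zero: "\<And>\<epsilon>. 0 < \<epsilon> \<Longrightarrow> \<epsilon> < muS \<Longrightarrow> pmf (Arr \<epsilon>) 0 > 0"
    and arr_mean: "\<And>\<epsilon>. 0 < \<epsilon> \<Longrightarrow> \<epsilon> < muS \<Longrightarrow>
                     measure_pmf.expectation (Arr \<epsilon>) real = muS - \<epsilon>"
    and arr_var: "((\<lambda>\<epsilon>. measure_pmf.variance (Arr \<epsilon>) real) \<longlongrightarrow> sigma2) (at_right 0)"
    and stat: "\<And>\<epsilon>. 0 < \<epsilon> \<Longrightarrow> \<epsilon> < muS \<Longrightarrow> stationary (lb_step (Arr \<epsilon>) S P) (Qbar \<epsilon>)"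
    and thr_opt: "\<And>\<epsilon> r. 0 < \<epsilon> \<Longrightarrow> \<epsilon> < muS \<Longrightarrow>
                     integrable (measure_pmf (Qbar \<epsilon>)) (\<lambda>q. norm (qvec q) ^ r)"
    and collapse: "\<exists>\<alpha> \<epsilon>0 M. 0 < \<alpha> \<and> \<alpha> \<le> 1 \<and> 0 < \<epsilon>0 \<and>
                     (\<forall>\<epsilon> r. 0 < \<epsilon> \<and> \<epsilon> < \<epsilon>0 \<and> \<epsilon> < muS \<and> r \<ge> 1 \<longrightarrow>
                        measure_pmf.expectation (Qbar \<epsilon>) (\<lambda>q. norm (perp_comp \<alpha> (qvec q)) ^ r)
                          \<le> M r)"
  shows "Limsup (at_right 0)
           (\<lambda>\<epsilon>. ereal (\<epsilon> * measure_pmf.expectation (Qbar \<epsilon>) (\<lambda>q. real (\<Sum>n\<in>UNIV. q n))))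
         \<le> ereal (zeta / 2)"
proof -
  obtain \<alpha> \<epsilon>0 M where al: "0 < \<alpha>" "\<alpha> \<le> 1" and e0: "0 < \<epsilon>0"
    and Mb: "\<forall>\<epsilon> r. 0 < \<epsilon> \<and> \<epsilon> < \<epsilon>0 \<and> \<epsilon> < muS \<and> r \<ge> 1 \<longrightarrow>
              measure_pmf.expectation (Qbar \<epsilon>) (\<lambda>q. norm (perp_comp \<alpha> (qvec q)) ^ r) \<le> M r"
    using collapse by blast
  have muS_pos: "0 < muS" unfolding muS_def using serv_pos by (simp add: sum_pos)
  define e1 where "e1 = min \<epsilon>0 muS"
  have e1: "0 < e1" using e0 muS_pos by (simp add: e1_def)
  define nu2 where "nu2 = (\<Sum>n\<in>UNIV. measure_pmf.variance (S n) real)"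
  define C where "C = real CARD('n) * (1 + 1/\<alpha>)"
  have C0: "0 \<le> C" using al by (simp add: C_def)
  define B where "B = (\<lambda>\<epsilon>. (measure_pmf.variance (Arr \<epsilon>) real + \<epsilon>^2 + nu2)/2
                          + C * sqrt \<epsilon> * (M 2 + real CARD('n) * real Smax)/2)"
  have key: "\<epsilon> * measure_pmf.expectation (Qbar \<epsilon>) (\<lambda>q. real (\<Sum>n\<in>UNIV. q n)) \<le> B \<epsilon>"
    if "0 < \<epsilon>" "\<epsilon> < e1" for \<epsilon>
  proof -
    have ep: "0 < \<epsilon>" "\<epsilon> < muS" "\<epsilon> < \<epsilon>0" using that by (auto simp: e1_def)
    define ppi where "ppi = Qbar \<epsilon>"
    define K where "K = lb_step (Arr \<epsilon>) S P"
    define \<delta> where "\<delta> = sqrt \<epsilon>"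
    have dl: "0 < \<delta>" using ep by (simp add: \<delta>_def)
    have dd: "\<delta> * \<delta> = \<epsilon>" using ep by (simp add: \<delta>_def)
    have st: "bind_pmf ppi K = ppi" using stat[OF ep(1,2)] by (simp add: stationary_def ppi_def K_def)
    have finA: "finite (set_pmf (Arr \<epsilon>))" using arr_bdd[OF ep(1,2)] finite_subset by blast
    have finK: "finite (set_pmf (K q))" for q unfolding K_def by (rule lb_fin[OF finA serv_bdd])
    define X where "X = (\<lambda>q::'n\<Rightarrow>nat. real (\<Sum>n\<in>UNIV. q n))"
    define Pq where "Pq = (\<lambda>q::'n\<Rightarrow>nat. (norm (perp_comp \<alpha> (qvec q)))^2)"
    have iN1: "integrable ppi (\<lambda>q. norm (qvec q))" using thr_opt[OF ep(1,2), of 1] by (simp add: ppi_def)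
    have iN2: "integrable ppi (\<lambda>q. (norm (qvec q))^2)" using thr_opt[OF ep(1,2), of 2] by (simp add: ppi_def)
    have X0: "0 \<le> X q" for q unfolding X_def by (rule of_nat_0_le_iff)
    have iX: "integrable ppi X"
    proof (rule Bochner_Integration.integrable_bound[OF integrable_mult_right[OF iN1, of "real CARD('n)"]])
      show "AE q in measure_pmf ppi. norm (X q) \<le> norm (real CARD('n) * norm (qvec q))"
        by (rule AE_pmfI) (use sum_le_norm X0 in \<open>simp add: X_def\<close>)
    qed simp
    have iX2: "integrable ppi (\<lambda>q. (X q)^2)"
    proof (rule Bochner_Integration.integrable_bound[OF integrable_mult_right[OF iN2, of "(real CARD('n))^2"]])
      show "AE q in measure_pmf ppi. norm ((X q)^2) \<le> norm ((real CARD('n))^2 * (norm (qvec q))^2)"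
      proof (rule AE_pmfI)
        fix q :: "'n \<Rightarrow> nat"
        have "(X q)^2 \<le> (real CARD('n) * norm (qvec q))^2"
          by (rule power_mono) (use sum_le_norm X0 in \<open>auto simp: X_def\<close>)
        then show "norm ((X q)^2) \<le> norm ((real CARD('n))^2 * (norm (qvec q))^2)"
          by (simp add: power_mult_distrib)
      qed
    qed simp
    have iP: "integrable ppi Pq"
    proof (rule Bochner_Integration.integrable_bound[OF integrable_mult_right[OF iN2, of 4]])
      show "AE q in measure_pmf ppi. norm (Pq q) \<le> norm (4 * (norm (qvec q))^2)"
      proof (rule AE_pmfI)
        fix q :: "'n \<Rightarrow> nat"
        have "(norm (perp_comp \<alpha> (qvec q)))^2 \<le> (2 * norm (qvec q))^2"
          by (rule power_mono[OF perp_norm]) simp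
        then show "norm (Pq q) \<le> norm (4 * (norm (qvec q))^2)"
          by (simp add: Pq_def power_mult_distrib)
      qed
    qed simp
    define g1 where "g1 = (\<lambda>q. measure_pmf.expectation (K q) X)"
    define g2 where "g2 = (\<lambda>q. measure_pmf.expectation (K q) (\<lambda>y. (X y)^2))"
    define gP where "gP = (\<lambda>q. measure_pmf.expectation (K q) Pq)"
    have s1: "integrable ppi g1 \<and> measure_pmf.expectation ppi X = measure_pmf.expectation ppi g1"
      unfolding g1_def by (rule stat_exp[OF st finK]) (auto simp: X0 iX)
    have s2: "integrable ppi g2 \<and> measure_pmf.expectation ppi (\<lambda>q. (X q)^2) = measure_pmf.expectation ppi g2"
      unfolding g2_def by (rule stat_exp[OF st finK]) (auto simp: iX2)
    have sP: "integrable ppi gP \<and> measure_pmf.expectation ppi Pq = measure_pmf.expectation ppi gP"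
      unfolding gP_def by (rule stat_exp[OF st finK]) (simp_all add: Pq_def iP[unfolded Pq_def])
    have PM: "measure_pmf.expectation ppi Pq \<le> M 2"
      using Mb ep by (auto simp: ppi_def Pq_def)
    define vA where "vA = measure_pmf.variance (Arr \<epsilon>) real"
    define c' where "c' = C * real CARD('n) * real Smax / \<delta>"
    define h where "h = (\<lambda>q. (X q)^2 - 2 * \<epsilon> * X q + (vA + \<epsilon>^2 + nu2) + (C * \<delta>) * gP q
                              + c' * g1 q - c' * X q + c' * \<epsilon>)"
    have lam: "measure_pmf.expectation (Arr \<epsilon>) real = muS - \<epsilon>" by (rule arr_mean[OF ep(1,2)])
    have mS: "(\<Sum>n\<in>UNIV. measure_pmf.expectation (S n) real) = muS" by (simp add: muS_def mu_def)
    have pw: "g2 q \<le> h q" for q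
    proof -
      have ki: "measure_pmf.expectation (K q) (\<lambda>y. (real (\<Sum>n\<in>UNIV. y n))^2) \<le>
           X q^2 + 2*X q*(measure_pmf.expectation (Arr \<epsilon>) real - (\<Sum>n\<in>UNIV. measure_pmf.expectation (S n) real))
           + (vA + (measure_pmf.expectation (Arr \<epsilon>) real - (\<Sum>n\<in>UNIV. measure_pmf.expectation (S n) real))^2 + nu2)
           + C*\<delta>* measure_pmf.expectation (K q) (\<lambda>y. (norm (perp_comp \<alpha> (qvec y)))^2)
           + (C * real CARD('n) * real Smax / \<delta>) *
               (measure_pmf.expectation (K q) (\<lambda>y. real (\<Sum>n\<in>UNIV. y n)) - X q
                 - (measure_pmf.expectation (Arr \<epsilon>) real - (\<Sum>n\<in>UNIV. measure_pmf.expectation (S n) real)))"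
        unfolding K_def X_def vA_def nu2_def C_def
        by (rule kernel_ineq[OF al dl finA serv_bdd])
      then show ?thesis
        unfolding lam mS g2_def h_def gP_def g1_def c'_def
        by (simp add: X_def Pq_def algebra_simps power2_eq_square)
    qed
    have "measure_pmf.expectation ppi g2 \<le> measure_pmf.expectation ppi h"
    proof (rule integral_mono)
      show "integrable ppi g2" using s2 by simp
      show "integrable ppi h" unfolding h_def using s1 sP iX iX2 by simp
    qed (rule pw)
    also have "measure_pmf.expectation ppi h =
        measure_pmf.expectation ppi (\<lambda>q. (X q)^2) - 2 * \<epsilon> * measure_pmf.expectation ppi X + (vA + \<epsilon>^2 + nu2)
        + (C * \<delta>) * measure_pmf.expectation ppi gP + c' * measure_pmf.expectation ppi g1
        - c' * measure_pmf.expectation ppi X + c' * \<epsilon>"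
      unfolding h_def using s1 sP iX iX2 by simp
    finally have main: "0 \<le> - 2 * \<epsilon> * measure_pmf.expectation ppi X + (vA + \<epsilon>^2 + nu2)
        + (C * \<delta>) * measure_pmf.expectation ppi Pq + c' * \<epsilon>"
      using s1 s2 sP by simp
    have "(C * \<delta>) * measure_pmf.expectation ppi Pq \<le> (C * \<delta>) * M 2"
      using PM C0 dl by (intro mult_left_mono) auto
    moreover have "c' * \<epsilon> = C * \<delta> * (real CARD('n) * real Smax)"
      using dl by (simp add: c'_def dd[symmetric] field_simps)
    ultimately have "2 * (\<epsilon> * measure_pmf.expectation ppi X) \<le> (vA + \<epsilon>^2 + nu2) + C * \<delta> * (M 2 + real CARD('n) * real Smax)"
      using main by (simp add: algebra_simps)
    then have fin: "\<epsilon> * measure_pmf.expectation ppi X \<le> (vA + \<epsilon>^2 + nu2)/2 + C * \<delta> * (M 2 + real CARD('n) * real Smax)/2"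
      by (rule half_le)
    then show ?thesis unfolding B_def vA_def \<delta>_def ppi_def X_def by simp
  qed
  have ev: "eventually (\<lambda>\<epsilon>. ereal (\<epsilon> * measure_pmf.expectation (Qbar \<epsilon>) (\<lambda>q. real (\<Sum>n\<in>UNIV. q n)))
             \<le> ereal (B \<epsilon>)) (at_right 0)"
    unfolding eventually_at_right_field using e1 key by auto
  have sq: "((\<lambda>\<epsilon>::real. sqrt \<epsilon>) \<longlongrightarrow> 0) (at_right 0)"
    using tendsto_real_sqrt[OF tendsto_ident_at[of "0::real" "{0<..}"]] by simp
  have id0: "((\<lambda>\<epsilon>::real. \<epsilon>) \<longlongrightarrow> 0) (at_right 0)" by (rule tendsto_ident_at)
  have "(B \<longlongrightarrow> (sigma2 + 0^2 + nu2)/2 + C * 0 * (M 2 + real CARD('n) * real Smax)/2) (at_right 0)"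
    unfolding B_def by (intro tendsto_intros arr_var sq id0) simp_all
  then have "(B \<longlongrightarrow> zeta / 2) (at_right 0)" by (simp add: zeta_def nu2_def)
  then have limB: "((\<lambda>\<epsilon>. ereal (B \<epsilon>)) \<longlongrightarrow> ereal (zeta/2)) (at_right 0)" by (rule tendsto_ereal)
  have "Limsup (at_right 0) (\<lambda>\<epsilon>. ereal (\<epsilon> * measure_pmf.expectation (Qbar \<epsilon>) (\<lambda>q. real (\<Sum>n\<in>UNIV. q n))))
        \<le> Limsup (at_right 0) (\<lambda>\<epsilon>. ereal (B \<epsilon>))"
    by (rule Limsup_mono[OF ev])
  also have "\<dots> = ereal (zeta/2)" by (rule lim_imp_Limsup[OF trivial_limit_at_right_real limB])
  finally show ?thesis .
qed

end
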